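(* Let $S=[B_{r-1},[B_r,F_X^+]_q]_q$ and $S^\tau=[B_{\tau(r-1)},[B_{\tau(r)},F_X^-]_q]_q$, and let $\mathcal Z_r=-(1-q^{-2})E_X^+L_{\tau(r)}$, $\mathcal Z_{\tau(r)}=-(1-q^{-2})E_X^-L_r$. Then $\mathcal Z_{\tau(r)}S=q^{-1}S\mathcal Z_{\tau(r)}+(1-q^{-2})[B_{r-1},B_r]_qL_rK_X$ and $\mathcal Z_rS^\tau=q^{-1}S^\tau\mathcal Z_r+(1-q^{-2})[B_{\tau(r-1)},B_{\tau(r)}]_qL_{\tau(r)}K_X$ hold in $B_{\mathbf c}$.
   Context: Let $\mathbb K$ be a field of characteristic zero and $q$ an indeterminate. $n\ge1$, $I=\{1,\dots,n\}$, $\mathfrak g=\mathfrak{sl}_{n+1}(\mathbb C)$, simple roots $\alpha_i$, fundamental weights $\varpi_i$, weight lattice $P$, Cartan matrix $a_{ii}=2$, $a_{ij}=-1$ if $|i-j|=1$, else $0$, form $(\alpha_i,\alpha_j)=a_{ij}$, $(\alpha_i,\varpi_j)=\delta_{ij}$. $U_q(\mathfrak g)$ is the $\mathbb K(q^{1/2})$-algebra generated by $E_i,F_i,K_\mu$ ($\mu\in P$) with $K_0=1$, $K_\mu K_\lambda=K_{\mu+\lambda}$, $K_\mu E_i=q^{(\alpha_i,\mu)}E_iK_\mu$, $K_\mu F_i=q^{-(\alpha_i,\mu)}F_iK_\mu$, $E_iF_j-F_jE_i=\delta_{ij}\frac{K_i-K_i^{-1}}{q-q^{-1}}$ ($K_i=K_{\alpha_i}$),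 and the quantum Serre relations. $[a,b]_c=ab-cba$. Fix $r$ with $2\le r\le\lceil n/2\rceil-1$, $X=\{r+1,\dots,n-r\}$, $\tau(i)=n-i+1$ (on weights $\varpi_i\mapsto\varpi_{\tau(i)}$). $E_X^+=[E_{r+1},[\dots,[E_{n-r-1},E_{n-r}]_{q^{-1}}\dots]_{q^{-1}}]_{q^{-1}}$, $E_X^-=[E_{n-r},[\dots,[E_{r+2},E_{r+1}]_{q^{-1}}\dots]_{q^{-1}}]_{q^{-1}}$, $F_X^+=[F_{r+1},[\dots,[F_{n-r-1},F_{n-r}]_q\dots]_q]_q$, $F_X^-=[F_{n-r},[\dots,[F_{r+2},F_{r+1}]_q\dots]_q]_q$ (equal to $E_{r+1}$, $F_{r+1}$ if $|X|=1$); $K_X=K_{r+1}\cdots K_{n-r}$; $L_i=K_iK_{\tau(i)}^{-1}$. $\mathcal M_X$ is generated by $E_j,F_j,K_j^{\pm1}$ ($j\in X$); $U^0_\Theta$ by the $K_\mu$ with $-w_X\tau(\mu)=\mu$ ($w_X$ longest element of the parabolic Weyl subgroup for $X$). Parameters $c_i\in\mathbb K(q^{1/2})^\times$ ($i\in I\setminus X$) with $c_i=c_{\tau(i)}$ for $i\notin X\cup\{r,\tau(r)\}$. $B_i=F_i-c_iE_{\tau(i)}K_i^{-1}$ for $i\in I\setminus(X\cup\{r,\tau(r)\})$, $B_r=F_r-c_r[E_X^+,E_{\tau(r)}]_{q^{-1}}K_r^{-1}$, $B_{\tau(r)}=F_{\tau(r)}-c_{\tau(r)}[E_X^-,E_r]_{q^{-1}}K_{\tau(r)}^{-1}$;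 $B_{\mathbf c}$ is the subalgebra generated by $\mathcal M_X$, $U^0_\Theta$ and the $B_i$. *)

theory Defs
  imports "HOL-Computational_Algebra.Polynomial" "HOL-Computational_Algebra.Fraction_Field" "HOL-Library.Function_Algebras"
begin

text \<open>Coefficient field K(q^(1/2)) = fraction field of K[t], with t = q^(1/2), q = t^2.\<close>

definition qhalf :: "'k::field_char_0 poly fract" where
  "qhalf = Fract [:0, 1:] 1"

definition qq :: "'k::field_char_0 poly fract" where
  "qq = qhalf ^ 2"

text \<open>Index set I = {1..n}; Cartan matrix of type A_n; simple roots written in the
  basis of fundamental weights (a weight mu = sum_j mu j * varpi_j, with mu j = 0 for j outside I),
  so that (alpha_i, mu) = mu i.\<close>

definition cartan :: "nat \<Rightarrow> nat \<Rightarrow> int" where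
  "cartan i j = (if i = j then 2 else if \<bar>int i - int j\<bar> = 1 then -1 else 0)"

definition wts :: "nat \<Rightarrow> (nat \<Rightarrow> int) set" where
  "wts n = {mu. \<forall>j. (j < 1 \<or> n < j) \<longrightarrow> mu j = 0}"

definition sroot :: "nat \<Rightarrow> nat \<Rightarrow> (nat \<Rightarrow> int)" where
  "sroot n i = (\<lambda>j. if 1 \<le> j \<and> j \<le> n then cartan i j else 0)"

definition tau :: "nat \<Rightarrow> nat \<Rightarrow> nat" where
  "tau n i = n - i + 1"

definition qcomm :: "('s \<Rightarrow> 'a::ring_1) \<Rightarrow> 's \<Rightarrow> 'a \<Rightarrow> 'a \<Rightarrow> 'a" where
  "qcomm phi c a b = a * b - phi c * (b * a)"

text \<open>The defining relations of U_q(sl_(n+1)) over K(q^(1/2)), realised in a unital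
  associative K(q^(1/2))-algebra 'a (scalars via the central unital ring map phi),
  by elements E i, F i (i in I) and K mu (mu in P).\<close>

definition uq_rels ::
  "nat \<Rightarrow> ('k::field_char_0 poly fract \<Rightarrow> 'a::ring_1) \<Rightarrow> (nat \<Rightarrow> 'a) \<Rightarrow> (nat \<Rightarrow> 'a)
     \<Rightarrow> ((nat \<Rightarrow> int) \<Rightarrow> 'a) \<Rightarrow> bool" where
  "uq_rels n phi E F K \<longleftrightarrow>
     (\<forall>x y. phi (x + y) = phi x + phi y) \<and> (\<forall>x y. phi (x * y) = phi x * phi y) \<and> phi 1 = 1 \<and>
     (\<forall>x a. phi x * a = a * phi x) \<and>
     K 0 = 1 \<and>
     (\<forall>mu\<in>wts n. \<forall>la\<in>wts n. K mu * K la = K (mu + la)) \<and>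
     (\<forall>mu\<in>wts n. \<forall>i\<in>{1..n}. K mu * E i = phi (qq powi (mu i)) * E i * K mu) \<and>
     (\<forall>mu\<in>wts n. \<forall>i\<in>{1..n}. K mu * F i = phi (qq powi (- mu i)) * F i * K mu) \<and>
     (\<forall>i\<in>{1..n}. \<forall>j\<in>{1..n}. E i * F j - F j * E i =
        (if i = j then phi (1 / (qq - 1 / qq)) * (K (sroot n i) - K (- sroot n i)) else 0)) \<and>
     (\<forall>i\<in>{1..n}. \<forall>j\<in>{1..n}. \<bar>int i - int j\<bar> = 1 \<longrightarrow>
        E i * E i * E j - phi (qq + 1 / qq) * (E i * E j * E i) + E j * E i * E i = 0 \<and>
        F i * F i * F j - phi (qq + 1 / qq) * (F i * F j * F i) + F j * F i * F i = 0) \<and>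
     (\<forall>i\<in>{1..n}. \<forall>j\<in>{1..n}. \<bar>int i - int j\<bar> > 1 \<longrightarrow>
        E i * E j = E j * E i \<and> F i * F j = F j * F i)"

definition EXp :: "nat \<Rightarrow> nat \<Rightarrow> ('k::field_char_0 poly fract \<Rightarrow> 'a::ring_1) \<Rightarrow> (nat \<Rightarrow> 'a) \<Rightarrow> 'a" where
  "EXp n r phi E = foldr (\<lambda>j acc. qcomm phi (1 / qq) (E j) acc) [r+1..<n-r] (E (n - r))"

definition EXm :: "nat \<Rightarrow> nat \<Rightarrow> ('k::field_char_0 poly fract \<Rightarrow> 'a::ring_1) \<Rightarrow> (nat \<Rightarrow> 'a) \<Rightarrow> 'a" where
  "EXm n r phi E = foldr (\<lambda>j acc. qcomm phi (1 / qq) (E j) acc) (rev [r+2..<n-r+1]) (E (r + 1))"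

definition FXp :: "nat \<Rightarrow> nat \<Rightarrow> ('k::field_char_0 poly fract \<Rightarrow> 'a::ring_1) \<Rightarrow> (nat \<Rightarrow> 'a) \<Rightarrow> 'a" where
  "FXp n r phi F = foldr (\<lambda>j acc. qcomm phi qq (F j) acc) [r+1..<n-r] (F (n - r))"

definition FXm :: "nat \<Rightarrow> nat \<Rightarrow> ('k::field_char_0 poly fract \<Rightarrow> 'a::ring_1) \<Rightarrow> (nat \<Rightarrow> 'a) \<Rightarrow> 'a" where
  "FXm n r phi F = foldr (\<lambda>j acc. qcomm phi qq (F j) acc) (rev [r+2..<n-r+1]) (F (r + 1))"

definition KX :: "nat \<Rightarrow> nat \<Rightarrow> ((nat \<Rightarrow> int) \<Rightarrow> 'a) \<Rightarrow> 'a" where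
  "KX n r K = K (\<Sum>j\<in>{r+1..n-r}. sroot n j)"

definition Lw :: "nat \<Rightarrow> ((nat \<Rightarrow> int) \<Rightarrow> 'a) \<Rightarrow> nat \<Rightarrow> 'a" where
  "Lw n K i = K (sroot n i - sroot n (tau n i))"

definition Bgen ::
  "nat \<Rightarrow> nat \<Rightarrow> ('k::field_char_0 poly fract \<Rightarrow> 'a::ring_1) \<Rightarrow> (nat \<Rightarrow> 'a) \<Rightarrow> (nat \<Rightarrow> 'a)
     \<Rightarrow> ((nat \<Rightarrow> int) \<Rightarrow> 'a) \<Rightarrow> (nat \<Rightarrow> 'k poly fract) \<Rightarrow> nat \<Rightarrow> 'a" where
  "Bgen n r phi E F K c i =
     (if i = r then F r - phi (c r) * qcomm phi (1 / qq) (EXp n r phi E) (E (tau n r)) * K (- sroot n r)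
      else if i = tau n r then
        F (tau n r) - phi (c (tau n r)) * qcomm phi (1 / qq) (EXm n r phi E) (E r) * K (- sroot n (tau n r))
      else F i - phi (c i) * E (tau n i) * K (- sroot n i))"

end

theory Submission imports Defs begin

lemma qq_Fract: "(qq::'k::field_char_0 poly fract) = Fract ([:0,1:]^2) 1"
  unfolding qq_def qhalf_def by (simp add: power2_eq_square)
lemma qq_nz: "qq \<noteq> (0::'k::field_char_0 poly fract)"
  unfolding qq_Fract by (simp add: Zero_fract_def eq_fract)
lemma qq_sq_ne1: "qq * qq \<noteq> (1::'k::field_char_0 poly fract)"
proof
  assume "qq * qq = (1::'k poly fract)"
  hence "Fract ([:0,1:]^4) 1 = (Fract 1 1 :: 'k poly fract)" unfolding qq_Fract One_fract_def[symmetric]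
    by (simp add: power_add[symmetric] One_fract_def)
  hence "([:0,1:]^4 :: 'k poly) = 1" by (simp add: eq_fract)
  hence "degree ([:0,1:]^4 :: 'k poly) = 0" by simp
  thus False by (simp add: degree_power_eq)
qed
lemma qq_sq_nem1: "qq * qq \<noteq> -(1::'k::field_char_0 poly fract)"
proof
  assume "qq * qq = -(1::'k poly fract)"
  hence "Fract ([:0,1:]^4) 1 = (Fract (-1) 1 :: 'k poly fract)" unfolding qq_Fract 
    by (simp add: power_add[symmetric] One_fract_def)
  hence "([:0,1:]^4 :: 'k poly) = -1" by (simp add: eq_fract)
  hence "degree ([:0,1:]^4 :: 'k poly) = 0" by simp
  thus False by (simp add: degree_power_eq)
qed

lemma qq_powi_add: "qq powi a * qq powi b = (qq::'k::field_char_0 poly fract) powi (a + b)"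
  using power_int_add[OF disjI1[OF qq_nz], of a b] by (rule sym)

lemma assoc_w: "(x::'a::ring_1) * a = y \<Longrightarrow> x * (a * w) = y * w"
  by (simp add: mult.assoc[symmetric])

definition Pq :: "('s \<Rightarrow> 'a::ring_1) \<Rightarrow> 's \<Rightarrow> (nat \<Rightarrow> 'a) \<Rightarrow> nat \<Rightarrow> nat \<Rightarrow> 'a" where
  "Pq phi c G i j = foldr (\<lambda>k acc. qcomm phi c (G k) acc) [i..<j] (G j)"
definition Mq :: "('s \<Rightarrow> 'a::ring_1) \<Rightarrow> 's \<Rightarrow> (nat \<Rightarrow> 'a) \<Rightarrow> nat \<Rightarrow> nat \<Rightarrow> 'a" where
  "Mq phi c G i j = foldr (\<lambda>k acc. qcomm phi c (G k) acc) (rev [Suc i..<Suc j]) (G i)"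

lemma Pq_same: "Pq phi c G j j = G j" by (simp add: Pq_def)
lemma Pq_step: "i < j \<Longrightarrow> Pq phi c G i j = qcomm phi c (G i) (Pq phi c G (Suc i) j)"
  by (simp add: Pq_def upt_conv_Cons)
lemma Mq_same: "Mq phi c G i i = G i" by (simp add: Mq_def)
lemma Mq_step: "i \<le> j \<Longrightarrow> Mq phi c G i (Suc j) = qcomm phi c (G (Suc j)) (Mq phi c G i j)"
  by (simp add: Mq_def)

lemma EXp_Pq: "EXp n r phi E = Pq phi (1/qq) E (r+1) (n-r)" by (simp add: EXp_def Pq_def)
lemma FXp_Pq: "FXp n r phi F = Pq phi qq F (r+1) (n-r)" by (simp add: FXp_def Pq_def)
lemma EXm_Mq: "EXm n r phi E = Mq phi (1/qq) E (r+1) (n-r)" by (simp add: EXm_def Mq_def)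
lemma FXm_Mq: "FXm n r phi F = Mq phi qq F (r+1) (n-r)" by (simp add: FXm_def Mq_def)

lemma C3_abs:
  fixes x y z Q Qi :: "'a::ring_1"
  assumes cQ: "\<And>a. Q * a = a * Q" and cQi: "\<And>a. Qi * a = a * Qi" and QQi: "Q * Qi = 1"
    and xz: "x * z = z * x"
    and S1: "y*y*x - (Q+Qi)*(y*x*y) + x*y*y = 0"
    and S2: "y*y*z - (Q+Qi)*(y*z*y) + z*y*y = 0"
  shows "(Q + Qi) * (y * (x*(y*z - Qi*(z*y)) - Qi*((y*z - Qi*(z*y))*x))
          - (x*(y*z - Qi*(z*y)) - Qi*((y*z - Qi*(z*y))*x)) * y) = 0"
proof -
  have r1: "\<And>a b. a * (Q * b) = Q * (a * b)" "\<And>a. a * Q = Q * a"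
    using cQ by (metis mult.assoc)+
  have r2: "\<And>a b. a * (Qi * b) = Qi * (a * b)" "\<And>a. a * Qi = Qi * a"
    using cQi by (metis mult.assoc)+
  have r3: "Qi * Q = 1" "\<And>b. Q * (Qi * b) = b" "\<And>b. Qi * (Q * b) = b"
    using QQi cQ by (metis mult.assoc mult_1)+
  let ?S1 = "y*y*x - (Q+Qi)*(y*x*y) + x*y*y"
  let ?S2 = "y*y*z - (Q+Qi)*(y*z*y) + z*y*y"
  let ?C = "x*z - z*x"
  have "(Q + Qi) * (y * (x*(y*z - Qi*(z*y)) - Qi*((y*z - Qi*(z*y))*x))
          - (x*(y*z - Qi*(z*y)) - Qi*((y*z - Qi*(z*y))*x)) * y)
     = - (?S1 * z) + Qi*Qi*(z*?S1) + x*?S2 - Qi*Qi*(?S2*x) + Qi*Qi*(?C*y*y) - Qi*(Q+Qi)*(y*?C*y) + y*y*?C"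
    by (simp add: algebra_simps r1[of x] r1[of y] r1[of z] r2[of x] r2[of y] r2[of z] r3 QQi)
  also have "\<dots> = 0" using S1 S2 xz by simp
  finally show ?thesis .
qed

lemma sum_fun_app: "(\<Sum>k\<in>A. (f k :: 'b \<Rightarrow> int)) x = (\<Sum>k\<in>A. f k x)"
  by (induction A rule: infinite_finite_induct) auto

lemma sroot_app: "sroot n m k = (if 1 \<le> k \<and> k \<le> n then cartan m k else 0)"
  by (simp add: sroot_def)

lemma sroot_wts: "sroot n m \<in> wts n"
  by (simp add: sroot_def wts_def)
lemma wts_add: "mu \<in> wts n \<Longrightarrow> la \<in> wts n \<Longrightarrow> mu + la \<in> wts n"
  by (simp add: wts_def)
lemma wts_uminus: "mu \<in> wts n \<Longrightarrow> - mu \<in> wts n"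
  by (simp add: wts_def)
lemma wts_diff: "mu \<in> wts n \<Longrightarrow> la \<in> wts n \<Longrightarrow> mu - la \<in> wts n"
  by (simp add: wts_def)
lemma wts_zero: "0 \<in> wts n"
  by (simp add: wts_def)
lemma wts_sum: "(\<And>k. k \<in> A \<Longrightarrow> f k \<in> wts n) \<Longrightarrow> (\<Sum>k\<in>A. f k) \<in> wts n"
  by (induction A rule: infinite_finite_induct) (auto simp: wts_zero wts_add)

lemma cartan_eq: "cartan m k = (if k = m then 2 else 0) + (if k = Suc m then -1 else 0) + (if Suc k = m then -1 else 0)"
  unfolding cartan_def by auto
lemma cartan_sym: "cartan m k = cartan k m"
  unfolding cartan_def by (simp add: abs_minus_commute)

lemma rowsum: "(\<Sum>k\<in>{a..b}. cartan m k) = (if a \<le> m \<and> m \<le> b then 2 else 0) - (if a \<le> Suc m \<and> Suc m \<le> b then 1 else 0)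
   - (if 0 < m \<and> a \<le> m - 1 \<and> m - 1 \<le> b then 1 else 0)"
proof -
  have e: "\<And>k. (if Suc k = m then -1 else 0) = (if 0 < m then (if k = m - 1 then -1 else 0) else (0::int))"
    by auto
  have "(\<Sum>k\<in>{a..b}. cartan m k) = (\<Sum>k\<in>{a..b}. (if k = m then 2 else 0)) + (\<Sum>k\<in>{a..b}. (if k = Suc m then -1 else 0))
      + (\<Sum>k\<in>{a..b}. (if 0 < m then (if k = m - 1 then -1 else 0) else (0::int)))"
    unfolding cartan_eq e by (simp add: sum.distrib)
  also have "(\<Sum>k\<in>{a..b}. (if 0 < m then (if k = m - 1 then -1 else 0) else (0::int))) = (if 0 < m then (\<Sum>k\<in>{a..b}. (if k = m - 1 then -1 else 0)) else 0)"
    by simp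
  finally show ?thesis by (simp add: sum.delta)
qed

lemma colsum: "(\<Sum>k\<in>{a..b}. cartan k m) = (if a \<le> m \<and> m \<le> b then 2 else 0) - (if a \<le> Suc m \<and> Suc m \<le> b then 1 else 0)
   - (if 0 < m \<and> a \<le> m - 1 \<and> m - 1 \<le> b then 1 else 0)"
proof -
  have "(\<Sum>k\<in>{a..b}. cartan k m) = (\<Sum>k\<in>{a..b}. cartan m k)"
    by (rule sum.cong) (auto intro: cartan_sym)
  thus ?thesis using rowsum by simp
qed

lemma sum_sroot_rng: "1 \<le> a \<Longrightarrow> b \<le> n \<Longrightarrow> (\<Sum>k=a..b. sroot n m k) = (\<Sum>k=a..b. cartan m k)"
  by (rule sum.cong) (auto simp: sroot_app)

lemma qq_powi_m1: "(qq::'k::field_char_0 poly fract) powi (-1) = 1/qq"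
  by (simp add: power_int_minus divide_inverse)

locale uqm =
  fixes n :: nat and phi :: "'k::field_char_0 poly fract \<Rightarrow> 'a::ring_1"
    and E F :: "nat \<Rightarrow> 'a" and K :: "(nat \<Rightarrow> int) \<Rightarrow> 'a"
  assumes rels: "uq_rels n phi E F K"
begin

lemma phi_add: "phi (x + y) = phi x + phi y" using rels unfolding uq_rels_def by blast
lemma phi_mult: "phi (x * y) = phi x * phi y" using rels unfolding uq_rels_def by blast
lemma phi_1: "phi 1 = 1" using rels unfolding uq_rels_def by blast
lemma cen: "phi x * a = a * phi x" using rels unfolding uq_rels_def by blast
lemma K0: "K 0 = 1" using rels unfolding uq_rels_def by blast
lemma KK: "mu \<in> wts n \<Longrightarrow> la \<in> wts n \<Longrightarrow> K mu * K la = K (mu + la)"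
  using rels unfolding uq_rels_def by blast
lemma KE: "mu \<in> wts n \<Longrightarrow> i \<in> {1..n} \<Longrightarrow> K mu * E i = phi (qq powi (mu i)) * E i * K mu"
  using rels unfolding uq_rels_def by blast
lemma KF: "mu \<in> wts n \<Longrightarrow> i \<in> {1..n} \<Longrightarrow> K mu * F i = phi (qq powi (- mu i)) * F i * K mu"
  using rels unfolding uq_rels_def by blast
lemma EF: "i \<in> {1..n} \<Longrightarrow> j \<in> {1..n} \<Longrightarrow> E i * F j - F j * E i =
        (if i = j then phi (1 / (qq - 1 / qq)) * (K (sroot n i) - K (- sroot n i)) else 0)"
  using rels unfolding uq_rels_def by blast
lemma serreE: "i \<in> {1..n} \<Longrightarrow> j \<in> {1..n} \<Longrightarrow> \<bar>int i - int j\<bar> = 1 \<Longrightarrow>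
        E i * E i * E j - phi (qq + 1 / qq) * (E i * E j * E i) + E j * E i * E i = 0"
  using rels unfolding uq_rels_def by blast
lemma serreF: "i \<in> {1..n} \<Longrightarrow> j \<in> {1..n} \<Longrightarrow> \<bar>int i - int j\<bar> = 1 \<Longrightarrow>
        F i * F i * F j - phi (qq + 1 / qq) * (F i * F j * F i) + F j * F i * F i = 0"
  using rels unfolding uq_rels_def by blast
lemma farE: "i \<in> {1..n} \<Longrightarrow> j \<in> {1..n} \<Longrightarrow> \<bar>int i - int j\<bar> > 1 \<Longrightarrow> E i * E j = E j * E i"
  using rels unfolding uq_rels_def by blast
lemma farF: "i \<in> {1..n} \<Longrightarrow> j \<in> {1..n} \<Longrightarrow> \<bar>int i - int j\<bar> > 1 \<Longrightarrow> F i * F j = F j * F i"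
  using rels unfolding uq_rels_def by blast

lemma phi_0: "phi 0 = 0"
  using phi_add[of 0 0] by simp
lemma phi_minus: "phi (- x) = - phi x"
  using phi_add[of x "-x"] phi_0 by (simp add: add_eq_0_iff2)
lemma phi_diff: "phi (x - y) = phi x - phi y"
  using phi_add[of x "-y"] phi_minus by simp
lemma cen_left: "a * (phi s * b) = phi s * (a * b)"
  by (metis cen mult.assoc)
lemma cen_right: "a * phi s = phi s * a"
  by (simp add: cen)
lemma phi_phi: "phi s * (phi t * b) = phi (s * t) * b"
  by (simp add: phi_mult mult.assoc)
lemma phi_inv: "s \<noteq> 0 \<Longrightarrow> phi s * phi (1 / s) = 1"
  by (simp add: phi_mult[symmetric] phi_1)


lemma qc_comm:
  assumes "x * a = a * x" "x * b = b * x"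
  shows "x * qcomm phi c a b = qcomm phi c a b * x"
proof -
  have "x * qcomm phi c a b = x * a * b - phi c * (x * b * a)"
    by (simp add: qcomm_def algebra_simps cen_left[of x])
  also have "\<dots> = a * b * x - phi c * (b * a * x)"
    using assms by (metis mult.assoc)
  also have "\<dots> = qcomm phi c a b * x" by (simp add: qcomm_def algebra_simps)
  finally show ?thesis .
qed

lemma qc_wt:
  assumes "x * a = phi s * a * x" "x * b = phi t * b * x"
  shows "x * qcomm phi c a b = phi (s * t) * qcomm phi c a b * x"
proof -
  have "x * qcomm phi c a b = x * a * b - phi c * (x * b * a)"
    by (simp add: qcomm_def algebra_simps cen_left[of x])
  also have "\<dots> = phi s * a * (x * b) - phi c * (phi t * b * (x * a))"
    using assms by (simp add: mult.assoc)
  also have "\<dots> = phi s * a * (phi t * b * x) - phi c * (phi t * b * (phi s * a * x))"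
    using assms by simp
  also have "\<dots> = phi (s * t) * qcomm phi c a b * x"
    by (simp add: qcomm_def algebra_simps cen_left[of a] cen_left[of b] phi_phi mult.commute)
  finally show ?thesis .
qed

lemma qc_assoc:
  assumes "a * cc = cc * a"
  shows "qcomm phi y a (qcomm phi x b cc) = qcomm phi x (qcomm phi y a b) cc"
proof -
  have "qcomm phi y a (qcomm phi x b cc) = a*b*cc - phi x * (a*cc*b) - phi y * (b*cc*a) + phi y * (phi x * (cc*b*a))"
    by (simp add: qcomm_def algebra_simps cen_left[of a] cen_left[of b] cen_left[of cc] cen_right[of b] cen_right[of cc] cen_right[of a])
  also have "\<dots> = a*b*cc - phi x * (cc*a*b) - phi y * (b*a*cc) + phi y * (phi x * (cc*b*a))"
    using assms by (simp add: mult.assoc[symmetric]) (simp add: mult.assoc)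
  also have "\<dots> = qcomm phi x (qcomm phi y a b) cc"
    by (simp add: qcomm_def algebra_simps cen_left[of a] cen_left[of b] cen_left[of cc] cen_right[of b] cen_right[of cc] cen_right[of a] phi_phi mult.commute)
  finally show ?thesis .
qed

lemma Pq_comm:
  assumes "\<forall>k\<in>{i..j}. x * G k = G k * x" "i \<le> j"
  shows "x * Pq phi c G i j = Pq phi c G i j * x"
  using assms
proof (induction "j - i" arbitrary: i)
  case 0 thus ?case by (simp add: Pq_same)
next
  case (Suc d)
  hence "i < j" by simp
  have IH: "x * Pq phi c G (Suc i) j = Pq phi c G (Suc i) j * x"
    using Suc by simp
  have "x * G i = G i * x" using Suc by simp
  thus ?case using IH qc_comm by (simp add: Pq_step[OF \<open>i < j\<close>])
qed

lemma Mq_comm: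
  assumes "\<forall>k\<in>{i..j}. x * G k = G k * x" "i \<le> j"
  shows "x * Mq phi c G i j = Mq phi c G i j * x"
  using assms
proof (induction j)
  case 0 thus ?case by (simp add: Mq_same)
next
  case (Suc j)
  show ?case
  proof (cases "i = Suc j")
    case True thus ?thesis using Suc by (simp add: Mq_same)
  next
    case False
    hence "i \<le> j" using Suc by simp
    have IH: "x * Mq phi c G i j = Mq phi c G i j * x" using Suc \<open>i \<le> j\<close> by simp
    have "x * G (Suc j) = G (Suc j) * x" using Suc by simp
    thus ?thesis using IH qc_comm by (simp add: Mq_step[OF \<open>i \<le> j\<close>])
  qed
qed

lemma Pq_wt:
  assumes "\<forall>k\<in>{i..j}. x * G k = phi (qq powi w k) * G k * x" "i \<le> j"
  shows "x * Pq phi c G i j = phi (qq powi (\<Sum>k=i..j. w k)) * Pq phi c G i j * x"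
  using assms
proof (induction "j - i" arbitrary: i)
  case 0 thus ?case by (simp add: Pq_same)
next
  case (Suc d)
  hence "i < j" by simp
  have IH: "x * Pq phi c G (Suc i) j = phi (qq powi (\<Sum>k=Suc i..j. w k)) * Pq phi c G (Suc i) j * x"
    using Suc by simp
  have "x * G i = phi (qq powi w i) * G i * x" using Suc by simp
  from qc_wt[OF this IH] have "x * Pq phi c G i j = phi (qq powi w i * qq powi (\<Sum>k=Suc i..j. w k)) * Pq phi c G i j * x"
    by (simp add: Pq_step[OF \<open>i < j\<close>])
  also have "qq powi w i * qq powi (\<Sum>k=Suc i..j. w k) = qq powi (\<Sum>k=i..j. w k)"
    using \<open>i < j\<close> by (simp add: qq_powi_add sum.atLeast_Suc_atMost)
  finally show ?case .
qed

lemma Mq_wt: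
  assumes "\<forall>k\<in>{i..j}. x * G k = phi (qq powi w k) * G k * x" "i \<le> j"
  shows "x * Mq phi c G i j = phi (qq powi (\<Sum>k=i..j. w k)) * Mq phi c G i j * x"
  using assms
proof (induction j)
  case 0 thus ?case by (simp add: Mq_same)
next
  case (Suc j)
  show ?case
  proof (cases "i = Suc j")
    case True thus ?thesis using Suc by (simp add: Mq_same)
  next
    case False
    hence "i \<le> j" using Suc by simp
    have IH: "x * Mq phi c G i j = phi (qq powi (\<Sum>k=i..j. w k)) * Mq phi c G i j * x"
      using Suc \<open>i \<le> j\<close> by simp
    have "x * G (Suc j) = phi (qq powi w (Suc j)) * G (Suc j) * x" using Suc by simp
    from qc_wt[OF this IH] have "x * Mq phi c G i (Suc j) = phi (qq powi w (Suc j) * qq powi (\<Sum>k=i..j. w k)) * Mq phi c G i (Suc j) * x"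
      by (simp add: Mq_step[OF \<open>i \<le> j\<close>])
    also have "qq powi w (Suc j) * qq powi (\<Sum>k=i..j. w k) = qq powi (\<Sum>k=i..Suc j. w k)"
      using \<open>i \<le> j\<close> by (simp add: qq_powi_add add.commute)
    finally show ?thesis .
  qed
qed

lemma Pq_RA:
  assumes "\<forall>k\<in>{i..Suc j}. \<forall>l\<in>{i..Suc j}. k + 2 \<le> l \<longrightarrow> G k * G l = G l * G k" "i \<le> j"
  shows "Pq phi c G i (Suc j) = qcomm phi c (Pq phi c G i j) (G (Suc j))"
  using assms
proof (induction "j - i" arbitrary: i)
  case 0 thus ?case by (simp add: Pq_same Pq_step)
next
  case (Suc d)
  hence "i < j" by simp
  have IH: "Pq phi c G (Suc i) (Suc j) = qcomm phi c (Pq phi c G (Suc i) j) (G (Suc j))"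
  proof (rule Suc.hyps(1)[of "Suc i"])
    show "d = j - Suc i" using Suc.hyps(2) by simp
    show "Suc i \<le> j" using \<open>i < j\<close> by simp
    show "\<forall>k\<in>{Suc i..Suc j}. \<forall>l\<in>{Suc i..Suc j}. k + 2 \<le> l \<longrightarrow> G k * G l = G l * G k"
      using Suc.prems(1) by (meson atLeastAtMost_iff le_SucI le_trans order_refl)
  qed
  have cm: "G i * G (Suc j) = G (Suc j) * G i" using Suc.prems(1) \<open>i < j\<close>
    by (metis Suc_leI atLeastAtMost_iff le_SucI nat_le_linear not_less_eq_eq numeral_2_eq_2 add_2_eq_Suc' Suc_le_mono)
  show ?case
    by (simp add: Pq_step[OF \<open>i < j\<close>] Pq_step[of i "Suc j"] \<open>i < j\<close> less_SucI IH qc_assoc[OF cm])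
qed

lemma qq_plus_nz: "qq + 1/qq \<noteq> (0::'k poly fract)"
proof
  assume h: "qq + 1/qq = (0::'k poly fract)"
  have "qq * qq + 1 = qq * (qq + 1/(qq::'k poly fract))" using qq_nz by (simp add: distrib_left)
  also have "\<dots> = 0" by (simp only: h mult_zero_right)
  finally have "qq * qq = -(1::'k poly fract)" by (simp add: eq_neg_iff_add_eq_0)
  thus False using qq_sq_nem1 by blast
qed
lemma qq_minus_nz: "qq - 1/qq \<noteq> (0::'k poly fract)"
proof
  assume h: "qq - 1/qq = (0::'k poly fract)"
  have "qq * qq - 1 = qq * (qq - 1/(qq::'k poly fract))" using qq_nz by (simp add: right_diff_distrib)
  also have "\<dots> = 0" by (simp only: h mult_zero_right)
  finally have "qq * qq = (1::'k poly fract)" by simp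
  thus False using qq_sq_ne1 by blast
qed

lemma phi_cancel: "s \<noteq> 0 \<Longrightarrow> phi s * d = 0 \<Longrightarrow> d = 0"
proof -
  assume "s \<noteq> 0" "phi s * d = 0"
  hence "phi (1/s) * (phi s * d) = 0" by simp
  thus "d = 0" using \<open>s \<noteq> 0\<close> by (simp add: mult.assoc[symmetric] phi_mult[symmetric] phi_1)
qed

lemma QQi: "phi qq * phi (1/qq) = 1"
  using phi_inv[OF qq_nz] .

abbreviation Ep where "Ep \<equiv> Pq phi (1/qq) E"
abbreviation Em where "Em \<equiv> Mq phi (1/qq) E"
abbreviation Fp where "Fp \<equiv> Pq phi qq F"

lemma E_far: "k \<in> {1..n} \<Longrightarrow> l \<in> {1..n} \<Longrightarrow> k + 2 \<le> l \<or> l + 2 \<le> k \<Longrightarrow> E k * E l = E l * E k"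
  by (rule farE) auto
lemma F_far: "k \<in> {1..n} \<Longrightarrow> l \<in> {1..n} \<Longrightarrow> k + 2 \<le> l \<or> l + 2 \<le> k \<Longrightarrow> F k * F l = F l * F k"
  by (rule farF) auto
lemma EF_ne: "k \<in> {1..n} \<Longrightarrow> l \<in> {1..n} \<Longrightarrow> k \<noteq> l \<Longrightarrow> E k * F l = F l * E k"
  using EF[of k l] by simp

lemma Ep_RA: "1 \<le> i \<Longrightarrow> i \<le> j \<Longrightarrow> Suc j \<le> n \<Longrightarrow> Ep i (Suc j) = qcomm phi (1/qq) (Ep i j) (E (Suc j))"
  by (rule Pq_RA) (auto intro: E_far)
lemma Fp_RA: "1 \<le> i \<Longrightarrow> i \<le> j \<Longrightarrow> Suc j \<le> n \<Longrightarrow> Fp i (Suc j) = qcomm phi qq (Fp i j) (F (Suc j))"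
  by (rule Pq_RA) (auto intro: F_far)

lemma Ep_farcomm: "k \<in> {1..n} \<Longrightarrow> 1 \<le> i \<Longrightarrow> i \<le> j \<Longrightarrow> j \<le> n \<Longrightarrow> (\<forall>l\<in>{i..j}. k + 2 \<le> l \<or> l + 2 \<le> k)
   \<Longrightarrow> E k * Ep i j = Ep i j * E k"
  apply (rule Pq_comm)
   apply (intro ballI)
   apply (rule E_far)
  by auto

definition SE :: "'a \<Rightarrow> 'a \<Rightarrow> 'a" where
  "SE x w = x*x*w - phi (qq + 1/qq) * (x*w*x) + w*x*x"

lemma phi_qqplus: "phi (qq + 1/qq) = phi qq + phi (1/qq)" by (simp add: phi_add)

lemma serre_qc: "x * qcomm phi (1/qq) x w - phi qq * qcomm phi (1/qq) x w * x = SE x w"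
  by (simp add: SE_def qcomm_def phi_qqplus algebra_simps cen_left[of x] cen_left[of w] phi_phi phi_1 qq_nz)

lemma serre_lin: "b * x = x * b \<Longrightarrow> SE x (qcomm phi c a b) = SE x a * b - phi c * (b * SE x a)"
proof -
  assume h: "b * x = x * b"
  have "SE x (qcomm phi c a b) = x*x*a*b - phi c * (x*x*b*a) - phi (qq + 1/qq) * (x*a*b*x) + phi (qq + 1/qq) * (phi c * (x*b*a*x)) + a*b*x*x - phi c * (b*a*x*x)"
    by (simp add: SE_def qcomm_def algebra_simps cen_left[of x] cen_left[of a] cen_left[of b])
  also have "\<dots> = x*x*a*b - phi c * (b*x*x*a) - phi (qq + 1/qq) * (x*a*x*b) + phi (qq + 1/qq) * (phi c * (b*x*a*x)) + a*x*x*b - phi c * (b*a*x*x)"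
    using h by (simp add: mult.assoc)
  also have "\<dots> = SE x a * b - phi c * (b * SE x a)"
    by (simp add: SE_def algebra_simps cen_left[of x] cen_left[of a] cen_left[of b] phi_phi mult.commute)
  finally show ?thesis .
qed

lemma SE_serre: "i \<in> {1..n} \<Longrightarrow> j \<in> {1..n} \<Longrightarrow> \<bar>int i - int j\<bar> = 1 \<Longrightarrow> SE (E i) (E j) = 0"
  using serreE unfolding SE_def by (simp add: mult.assoc)

lemma G2: assumes "1 \<le> i" "i < j" "j \<le> n"
  shows "E i * Ep i j = phi qq * Ep i j * E i"
proof -
  have "SE (E i) (Ep (Suc i) j) = 0"
  proof (cases "Suc i = j")
    case True thus ?thesis using assms by (simp add: Pq_same SE_serre)
  next
    case False
    hence "Suc i < j" using assms by simp
    have cm: "Ep (Suc (Suc i)) j * E i = E i * Ep (Suc (Suc i)) j"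
      using Ep_farcomm[of i "Suc (Suc i)" j] assms \<open>Suc i < j\<close> by auto
    show ?thesis using serre_lin[OF cm] SE_serre[of i "Suc i"] assms \<open>Suc i < j\<close>
      by (simp add: Pq_step[OF \<open>Suc i < j\<close>])
  qed
  hence "E i * Ep i j - phi qq * Ep i j * E i = 0"
    using serre_qc[of "E i" "Ep (Suc i) j"] by (simp add: Pq_step[OF \<open>i < j\<close>])
  thus ?thesis by simp
qed

lemma G3base: assumes "1 \<le> i" "Suc (Suc i) \<le> n"
  shows "E (Suc i) * Ep i (Suc (Suc i)) = Ep i (Suc (Suc i)) * E (Suc i)"
proof -
  let ?x = "E i" and ?y = "E (Suc i)" and ?z = "E (Suc (Suc i))"
  have xz: "?x * ?z = ?z * ?x" using E_far[of i "Suc (Suc i)"] assms by auto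
  have S1: "?y*?y*?x - (phi qq + phi (1/qq))*(?y*?x*?y) + ?x*?y*?y = 0"
    using SE_serre[of "Suc i" i] assms by (simp add: SE_def phi_qqplus)
  have S2: "?y*?y*?z - (phi qq + phi (1/qq))*(?y*?z*?y) + ?z*?y*?y = 0"
    using SE_serre[of "Suc i" "Suc (Suc i)"] assms by (simp add: SE_def phi_qqplus)
  have "(phi qq + phi (1/qq)) * (?y * (?x*(?y*?z - phi (1/qq)*(?z*?y)) - phi (1/qq)*((?y*?z - phi (1/qq)*(?z*?y))*?x))
          - (?x*(?y*?z - phi (1/qq)*(?z*?y)) - phi (1/qq)*((?y*?z - phi (1/qq)*(?z*?y))*?x)) * ?y) = 0"
    by (rule C3_abs[OF cen cen QQi xz S1 S2])
  hence "phi (qq + 1/qq) * (?y * Ep i (Suc (Suc i)) - Ep i (Suc (Suc i)) * ?y) = 0"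
    by (simp add: Pq_step Pq_same qcomm_def phi_qqplus)
  hence "?y * Ep i (Suc (Suc i)) - Ep i (Suc (Suc i)) * ?y = 0"
    by (rule phi_cancel[OF qq_plus_nz])
  thus ?thesis by simp
qed

lemma G3: assumes "1 \<le> i" "i < k" "k < j" "j \<le> n"
  shows "E k * Ep i j = Ep i j * E k"
  using assms
proof (induction "k - i" arbitrary: i)
  case 0 thus ?case by simp
next
  case (Suc d)
  show ?case
  proof (cases "k = Suc i")
    case True
    show ?thesis
    proof (cases "j = Suc k")
      case True
      thus ?thesis using G3base[of i] Suc.prems \<open>k = Suc i\<close> by simp
    next
      case False
      hence "Suc k < j" using Suc.prems by simp
      let ?W = "Ep (Suc (Suc k)) j"
      have cW1: "E k * ?W = ?W * E k"
        using Ep_farcomm[of k "Suc (Suc k)" j] Suc.prems \<open>Suc k < j\<close> by auto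
      have cW0: "E i * ?W = ?W * E i"
        using Ep_farcomm[of i "Suc (Suc k)" j] Suc.prems \<open>Suc k < j\<close> \<open>k = Suc i\<close> by auto
      have e1: "Ep k j = qcomm phi (1/qq) (qcomm phi (1/qq) (E k) (E (Suc k))) ?W"
        using \<open>Suc k < j\<close> Suc.prems by (simp add: Pq_step qc_assoc[OF cW1])
      have e2a: "Ep i j = qcomm phi (1/qq) (E i) (Ep k j)"
        using Suc.prems \<open>k = Suc i\<close> by (simp add: Pq_step[of i j])
      have e2b: "Ep i (Suc k) = qcomm phi (1/qq) (E i) (qcomm phi (1/qq) (E k) (E (Suc k)))"
        using \<open>k = Suc i\<close> by (simp add: Pq_step Pq_same)
      have e2: "Ep i j = qcomm phi (1/qq) (Ep i (Suc k)) ?W"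
        unfolding e2a e1 e2b by (rule qc_assoc[OF cW0])
      have c1: "E k * Ep i (Suc k) = Ep i (Suc k) * E k"
        using G3base[of i] Suc.prems \<open>k = Suc i\<close> \<open>Suc k < j\<close> by simp
      have c2: "E k * ?W = ?W * E k" by (rule cW1)
      show ?thesis unfolding e2 by (rule qc_comm[OF c1 c2])
    qed
  next
    case False
    hence "Suc i < k" using Suc.prems by simp
    have IH: "E k * Ep (Suc i) j = Ep (Suc i) j * E k"
      using Suc.hyps(1)[of "Suc i"] Suc.hyps(2) Suc.prems \<open>Suc i < k\<close> by simp
    have c0: "E k * E i = E i * E k" using E_far[of k i] Suc.prems \<open>Suc i < k\<close> by auto
    have "i < j" using Suc.prems by simp
    show ?thesis unfolding Pq_step[OF \<open>i < j\<close>] by (rule qc_comm[OF c0 IH])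
  qed
qed

lemma G4: assumes "1 \<le> i" "i \<le> e'" "e' \<le> e" "Suc e \<le> n"
  shows "Em i e' * Ep i (Suc e) = phi qq * Ep i (Suc e) * Em i e'"
  using assms
proof (induction e')
  case 0 thus ?case by simp
next
  case (Suc e')
  show ?case
  proof (cases "i = Suc e'")
    case True
    thus ?thesis using G2[of i "Suc e"] Suc.prems by (simp add: Mq_same)
  next
    case False
    hence "i \<le> e'" using Suc.prems by simp
    have IH: "Em i e' * Ep i (Suc e) = phi qq * Ep i (Suc e) * Em i e'"
      using Suc.IH Suc.prems \<open>i \<le> e'\<close> by simp
    have c: "E (Suc e') * Ep i (Suc e) = Ep i (Suc e) * E (Suc e')"
      using G3[of i "Suc e'" "Suc e"] Suc.prems \<open>i \<le> e'\<close> by simp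
    let ?X = "Ep i (Suc e)" and ?A = "Em i e'" and ?e = "E (Suc e')"
    have "Em i (Suc e') * ?X = ?e * (?A * ?X) - phi (1/qq) * (?A * (?e * ?X))"
      by (simp add: Mq_step[OF \<open>i \<le> e'\<close>] qcomm_def algebra_simps)
    also have "\<dots> = phi qq * (?X * (?e * ?A)) - phi (1/qq) * (phi qq * (?X * (?A * ?e)))"
      using IH c by (simp add: mult.assoc[symmetric] cen) (simp add: mult.assoc cen_left)
    also have "\<dots> = phi qq * ?X * Em i (Suc e')"
      by (simp add: Mq_step[OF \<open>i \<le> e'\<close>] qcomm_def algebra_simps cen_left[of ?X] phi_phi mult.commute)
    finally show ?thesis .
  qed
qed

lemma phi_lc: "phi s * (phi t * b) = phi t * (phi s * b)"
  by (rule cen_left)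
lemma phi_c: "phi s * phi t = phi t * phi s"
  by (rule cen)

lemma QQi_l: "phi qq * (phi (1/qq) * b) = b"
  by (simp add: mult.assoc[symmetric] QQi)
lemma QiQ_l: "phi (1/qq) * (phi qq * b) = b"
  by (simp add: mult.assoc[symmetric] QQi phi_c[of "1/qq"])
lemma QiQ: "phi (1/qq) * phi qq = 1"
  by (simp add: QQi phi_c[of "1/qq"])

abbreviation DD where "DD \<equiv> phi (1 / (qq - 1/qq))"

lemma DD_1: "phi qq * DD - DD * phi (1/qq) = 1"
proof -
  have f1: "\<And>x y d::'k poly fract. x * (1/d) - (1/d)*y = (x - y)*(1/d)" by (simp only: left_diff_distrib mult.commute)
  have f2: "\<And>d::'k poly fract. d \<noteq> 0 \<Longrightarrow> d * (1/d) = 1" by simp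
  have eq: "qq * (1 / (qq - 1/qq)) - (1 / (qq - 1/qq)) * (1/qq) = (1::'k poly fract)"
    unfolding f1 by (rule f2[OF qq_minus_nz])
  have "phi (qq * (1 / (qq - 1/qq)) - (1 / (qq - 1/qq)) * (1/qq)) = 1" by (simp only: eq phi_1)
  thus ?thesis by (simp only: phi_diff phi_mult)
qed

lemma DD_2: "DD - phi qq * (phi qq * DD) = - phi qq"
proof -
  have f3: "\<And>x d::'k poly fract. x \<noteq> 0 \<Longrightarrow> d \<noteq> 0 \<Longrightarrow> 1/d - x*(x*(1/d)) = -x*((x - 1/x)*(1/d))"
    by (simp add: field_simps)
  have f2: "\<And>d::'k poly fract. d \<noteq> 0 \<Longrightarrow> d * (1/d) = 1" by simp
  have eq: "(1 / (qq - 1/qq)) - qq * (qq * (1 / (qq - 1/qq))) = - (qq::'k poly fract)"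
    unfolding f3[OF qq_nz qq_minus_nz] f2[OF qq_minus_nz] by simp
  have "phi ((1 / (qq - 1/qq)) - qq * (qq * (1 / (qq - 1/qq)))) = phi (- qq)" by (simp only: eq)
  thus ?thesis by (simp only: phi_diff phi_mult phi_minus)
qed

lemma G6_step:
  fixes A B e f Kij Kiji K1 K1i :: 'a
  assumes h1: "A*B - B*A = DD*(Kij - Kiji)"
    and h2: "e*f - f*e = DD*(K1 - K1i)"
    and h3: "A*f = f*A" and h4: "e*B = B*e"
    and w1: "Kij*f = phi qq*f*Kij" and w2: "Kiji*f = phi (1/qq)*f*Kiji" and w3: "Kiji*e = phi qq*e*Kiji"
    and w4: "K1*A = phi (1/qq)*A*K1" and w5: "K1*B = phi qq*B*K1" and w6: "K1i*B = phi (1/qq)*B*K1i"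
    and kc1: "K1*Kiji = Kiji*K1" and kc2: "K1i*Kiji = Kiji*K1i"
  shows "qcomm phi (1/qq) e A * qcomm phi qq B f - qcomm phi qq B f * qcomm phi (1/qq) e A
         = DD*(Kij*K1 - Kiji*K1i)"
proof -
  let ?Q = "phi qq" and ?Qi = "phi (1/qq)"
  let ?H = "DD*(Kij - Kiji)" and ?H' = "DD*(K1 - K1i)"
  let ?X = "qcomm phi (1/qq) e A" and ?Y = "qcomm phi qq B f"
  have h4': "\<And>w. e*(B*w) = B*(e*w)" using h4 by (metis mult.assoc)
  have cYe: "e*?Y - ?Y*e = B*(e*f - f*e) - ?Q*((e*f - f*e)*B)"
    by (simp add: qcomm_def algebra_simps cen_left[of e] cen_left[of B] h4 h4')
  have cYA: "A*?Y - ?Y*A = (A*B - B*A)*f - ?Q*(f*(A*B - B*A))"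
  proof -
    have "A*?Y - ?Y*A = A*B*f - ?Q*((A*f)*B) - B*f*A + ?Q*(f*B*A)"
      by (simp add: qcomm_def algebra_simps cen_left[of A])
    also have "\<dots> = (A*B - B*A)*f - ?Q*(f*(A*B - B*A))"
      by (simp add: h3 algebra_simps)
    finally show ?thesis .
  qed
  have XY: "?X*?Y - ?Y*?X = e*(A*?Y - ?Y*A) + (e*?Y - ?Y*e)*A - ?Qi*(A*(e*?Y - ?Y*e) + (A*?Y - ?Y*A)*e)"
    by (simp add: qcomm_def[of phi "1/qq"] algebra_simps cen_left[of e] cen_left[of A] cen_left[of ?Y])
  have T1: "?H*f - ?Q*(f*?H) = f*Kiji"
  proof -
    have "?H*f - ?Q*(f*?H) = (?Q * DD - DD * ?Qi) * (f*Kiji)"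
      by (simp add: algebra_simps w1 w2 cen_left[of f] cen_left[of Kij] cen_left[of Kiji] phi_lc phi_c)
    thus ?thesis by (simp add: DD_1)
  qed
  have T2: "B*?H' - ?Q*(?H'*B) = - ?Q * (B*K1)"
  proof -
    have "B*?H' - ?Q*(?H'*B) = (DD - ?Q * (?Q * DD)) * (B*K1)"
      by (simp add: algebra_simps w5 w6 cen_left[of B] cen_left[of K1] cen_left[of K1i] phi_lc phi_c QQi_l QiQ_l)
    thus ?thesis by (simp add: DD_2)
  qed
  have "?X*?Y - ?Y*?X = e*(f*Kiji) + (- ?Q * (B*K1))*A - ?Qi*(A*(- ?Q * (B*K1)) + (f*Kiji)*e)"
    unfolding XY cYe cYA h1 h2 T1 T2 ..
  also have "\<dots> = (e*f - f*e)*Kiji + (A*B - B*A)*K1"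
  proof -
    have a1: "(- ?Q * (B*K1))*A = - (B*A*K1)"
      by (simp add: mult.assoc w4 cen_left[of B] phi_lc QQi_l QiQ_l)
    have a2: "(f*Kiji)*e = ?Q * (f*e*Kiji)"
      by (simp add: mult.assoc w3 cen_left[of f])
    show ?thesis unfolding a1 a2
      by (simp add: algebra_simps cen_left[of A] cen_left[of B] cen_left[of f] phi_lc QQi_l QiQ_l)
  qed
  also have "\<dots> = DD*(Kij*K1 - Kiji*K1i)"
    unfolding h1 h2 by (simp add: algebra_simps kc1 kc2)
  finally show ?thesis .
qed

lemma wt_w: "x * a = phi s * a * x \<Longrightarrow> x * (a * w) = phi s * (a * (x * w))"
  by (simp add: mult.assoc[symmetric])
lemma wt2_w: "x * a = phi s * (phi t * (a * x)) \<Longrightarrow> x * (a * w) = phi s * (phi t * (a * (x * w)))"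
  by (metis mult.assoc)

lemma QsQi: "phi qq * (phi s * (phi (1/qq) * b)) = phi s * b"
  by (metis QQi_l phi_lc)
lemma QisQ: "phi (1/qq) * (phi s * (phi qq * b)) = phi s * b"
  by (metis QiQ_l phi_lc)

lemma qq_m2: "phi (qq powi (-2)) = phi (1/qq) * phi (1/qq)"
proof -
  have "qq powi (-2) = (1/qq) * (1/(qq::'k poly fract))"
    by (simp add: power_int_minus power2_eq_square divide_inverse)
  show ?thesis unfolding \<open>qq powi (-2) = (1/qq) * (1/qq)\<close> by (rule phi_mult)
qed

lemma assemble:
  fixes B1 B Fx Em L KXX KXi :: 'a
  assumes F1: "Em * B1 = B1 * Em" and F2: "L * B1 = phi qq * B1 * L" and F3: "KXX * B1 = B1 * KXX"
    and F4: "Em * B = B * Em" and F5: "L * B = phi (1/qq) * (phi (1/qq) * (B * L))"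
    and F6: "L * Fx = Fx * L" and F7: "Em * Fx - Fx * Em = DD * (KXX - KXi)"
    and F8: "KXX * B = phi qq * B * KXX" and F9: "KXi * B = phi (1/qq) * B * KXi"
    and F10: "L * KXX = KXX * L"
  shows "- (phi a * Em * L) * qcomm phi qq B1 (qcomm phi qq B Fx)
     = phi (1/qq) * qcomm phi qq B1 (qcomm phi qq B Fx) * - (phi a * Em * L)
       + phi a * qcomm phi qq B1 B * L * KXX"
proof -
  let ?Q = "phi qq" and ?Qi = "phi (1/qq)"
  let ?T = "qcomm phi qq B Fx" and ?Z = "- (phi a * Em * L)"
  have F4': "\<And>w. Em * (B * w) = B * (Em * w)" using F4 by (metis mult.assoc)
  have F9': "\<And>w. KXi * (B * w) = ?Qi * (B * (KXi * w))" using F9 by (rule wt_w)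
  have F8': "\<And>w. KXX * (B * w) = ?Q * (B * (KXX * w))" using F8 by (rule wt_w)
  have A1: "Em * ?T - ?T * Em = - ?Q * (B * KXX)"
  proof -
    have "Em * ?T - ?T * Em = B * (Em * Fx - Fx * Em) - ?Q * ((Em * Fx - Fx * Em) * B)"
      by (simp add: qcomm_def algebra_simps cen_left[of Em] cen_left[of B] F4 F4')
    also have "\<dots> = (DD - ?Q * (?Q * DD)) * (B * KXX)"
      unfolding F7 by (simp add: algebra_simps F8 F9 F8' F9' cen_left[of B] cen_left[of KXX] cen_left[of KXi] phi_lc phi_c QQi_l QiQ_l)
    finally show ?thesis by (simp add: DD_2)
  qed
  have F5': "\<And>w. L * (B * w) = ?Qi * (?Qi * (B * (L * w)))" using F5 by (rule wt2_w)
  have F6': "\<And>w. L * (Fx * w) = Fx * (L * w)" using F6 by (metis mult.assoc)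
  have A2: "L * ?T = ?Qi * (?Qi * (?T * L))"
    by (simp add: qcomm_def algebra_simps F5 F6 F5' F6' cen_left[of L] cen_left[of B] cen_left[of Fx] phi_lc phi_c)
  have A3: "?Z * ?T = ?Qi * (?Qi * (?T * ?Z)) + phi a * (?Qi * (B * (L * KXX)))"
  proof -
    have "?Z * ?T = - (phi a * (?Qi * (?Qi * ((Em * ?T) * L))))"
      by (simp add: mult.assoc A2 cen_left[of Em] phi_lc)
    also have "Em * ?T = ?T * Em - ?Q * (B * KXX)" using A1 by (simp add: algebra_simps)
    finally show ?thesis
      by (simp add: algebra_simps cen_left[of B] cen_left[of ?T] cen_left[of Em] F10 phi_lc phi_c QQi_l QiQ_l)
  qed
  have F1': "\<And>w. Em * (B1 * w) = B1 * (Em * w)" using F1 by (metis mult.assoc)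
  have F2': "\<And>w. L * (B1 * w) = ?Q * (B1 * (L * w))" using F2 by (rule wt_w)
  have F3': "\<And>w. KXX * (B1 * w) = B1 * (KXX * w)" using F3 by (metis mult.assoc)
  have A4: "\<And>w. ?Z * (B1 * w) = ?Q * (B1 * (?Z * w))"
    by (simp add: algebra_simps F1 F1' F2 F2' cen_left[of Em] cen_left[of B1] phi_lc)
  have A3': "\<And>w. ?Z * (?T * w) = ?Qi * (?Qi * (?T * (?Z * w))) + phi a * (?Qi * (B * (L * (KXX * w))))"
  proof -
    fix w
    have "?Z * (?T * w) = (?Z * ?T) * w" by (simp add: mult.assoc)
    also have "\<dots> = ?Qi * (?Qi * (?T * (?Z * w))) + phi a * (?Qi * (B * (L * (KXX * w))))"
      unfolding A3 by (simp add: algebra_simps)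
    finally show "?Z * (?T * w) = ?Qi * (?Qi * (?T * (?Z * w))) + phi a * (?Qi * (B * (L * (KXX * w))))" .
  qed
  have ZB1: "?Z * B1 = ?Q * (B1 * ?Z)" using A4[of 1] by simp
  have e1: "?Z * (B1 * ?T) = ?Q * (B1 * (?Qi * (?Qi * (?T * ?Z)) + phi a * (?Qi * (B * (L * KXX)))))"
    unfolding A4 A3 ..
  have LKB1: "L * (KXX * B1) = ?Q * (B1 * (L * KXX))"
    by (simp add: F3 F2')
  have e2: "?Z * (?T * B1) = ?Qi * (?Qi * (?T * (?Q * (B1 * ?Z)))) + phi a * (?Qi * (B * (?Q * (B1 * (L * KXX)))))"
    unfolding A3' ZB1 LKB1 ..
  have "?Z * qcomm phi qq B1 ?T = ?Z * (B1 * ?T) - ?Q * (?Z * (?T * B1))"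
    unfolding qcomm_def[of phi qq B1] right_diff_distrib cen_left[of ?Z] ..
  also have "\<dots> = ?Q * (B1 * (?Qi * (?Qi * (?T * ?Z)) + phi a * (?Qi * (B * (L * KXX)))))
      - ?Q * (?Qi * (?Qi * (?T * (?Q * (B1 * ?Z)))) + phi a * (?Qi * (B * (?Q * (B1 * (L * KXX))))))"
    unfolding e1 e2 ..
  also have "\<dots> = phi (1/qq) * qcomm phi qq B1 ?T * ?Z + phi a * qcomm phi qq B1 B * L * KXX"
    by (simp add: qcomm_def algebra_simps cen_left[of B1] cen_left[of B] cen_left[of Fx] cen_left[of Em] cen_left[of L] phi_lc QQi_l QiQ_l QsQi QisQ)
  finally show ?thesis .
qed

lemma K_comm: "mu \<in> wts n \<Longrightarrow> la \<in> wts n \<Longrightarrow> K mu * K la = K la * K mu"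
  by (simp add: KK add.commute)

lemma Ep_wt: "mu \<in> wts n \<Longrightarrow> 1 \<le> i \<Longrightarrow> i \<le> j \<Longrightarrow> j \<le> n \<Longrightarrow>
    K mu * Ep i j = phi (qq powi (\<Sum>k=i..j. mu k)) * Ep i j * K mu"
  by (rule Pq_wt) (auto intro: KE)
lemma Em_wt: "mu \<in> wts n \<Longrightarrow> 1 \<le> i \<Longrightarrow> i \<le> j \<Longrightarrow> j \<le> n \<Longrightarrow>
    K mu * Em i j = phi (qq powi (\<Sum>k=i..j. mu k)) * Em i j * K mu"
  by (rule Mq_wt) (auto intro: KE)
lemma Fp_wt: "mu \<in> wts n \<Longrightarrow> 1 \<le> i \<Longrightarrow> i \<le> j \<Longrightarrow> j \<le> n \<Longrightarrow>
    K mu * Fp i j = phi (qq powi (\<Sum>k=i..j. - mu k)) * Fp i j * K mu"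
  by (rule Pq_wt) (auto intro: KF)

lemma rs_app: "1 \<le> l \<Longrightarrow> l \<le> n \<Longrightarrow> (\<Sum>k\<in>A. sroot n k) l = (\<Sum>k\<in>A. cartan k l)"
  by (simp add: sum_fun_app sroot_app)

lemma rs_wts: "(\<Sum>k\<in>A. sroot n k) \<in> wts n"
  by (rule wts_sum) (rule sroot_wts)

lemma phi_powi1: "phi (qq powi 1) = phi qq" by simp
lemma phi_powim1: "phi (qq powi (-1)) = phi (1/qq)" by (simp only: qq_powi_m1)

lemma G6: assumes "1 \<le> i" "i \<le> j" "j \<le> n"
  shows "Em i j * Fp i j - Fp i j * Em i j = DD * (K (\<Sum>k=i..j. sroot n k) - K (- (\<Sum>k=i..j. sroot n k)))"
  using assms
proof (induction j)
  case 0 thus ?case by simp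
next
  case (Suc j)
  show ?case
  proof (cases "i = Suc j")
    case True
    have s1: "(\<Sum>k=i..Suc j. sroot n k) = sroot n i" using True by simp
    have e1: "Em i (Suc j) = E i" "Fp i (Suc j) = F i" using True by (simp_all add: Mq_same Pq_same)
    have i1: "i \<in> {1..n}" using Suc.prems True by simp
    have ef: "E i * F i - F i * E i = DD * (K (sroot n i) - K (- sroot n i))"
      using EF[OF i1 i1] by (simp only: if_True simp_thms)
    show ?thesis unfolding s1 e1 by (rule ef)
  next
    case False
    hence ij: "i \<le> j" using Suc.prems by simp
    have jn: "Suc j \<le> n" using Suc.prems by simp
    let ?rs = "\<Sum>k=i..j. sroot n k"
    have IH: "Em i j * Fp i j - Fp i j * Em i j = DD * (K ?rs - K (- ?rs))"
      by (rule Suc.IH[OF Suc.prems(1) ij]) (use jn in simp)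
    have h2: "E (Suc j) * F (Suc j) - F (Suc j) * E (Suc j) = DD * (K (sroot n (Suc j)) - K (- sroot n (Suc j)))"
      using EF[of "Suc j" "Suc j"] jn by simp
    have h3: "Em i j * F (Suc j) = F (Suc j) * Em i j"
      using Mq_comm[of i j "F (Suc j)" E "1/qq"] EF_ne ij jn Suc.prems
      by (metis (no_types, lifting) atLeastAtMost_iff le_trans nat_le_linear not_less_eq_eq)
    have h4: "E (Suc j) * Fp i j = Fp i j * E (Suc j)"
      using Pq_comm[of i j "E (Suc j)" F qq] EF_ne ij jn Suc.prems
      by (metis (no_types, lifting) atLeastAtMost_iff le_trans nat_le_linear not_less_eq_eq)
    have r1: "?rs (Suc j) = -1" using rs_app[of "Suc j" "{i..j}"] jn ij by (simp add: colsum)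
    have r2: "(\<Sum>k=i..j. sroot n (Suc j) k) = -1"
      using sum_sroot_rng[where a=i and b=j and m="Suc j" and n=n] Suc.prems ij jn by (simp add: rowsum)
    have w1: "K ?rs * F (Suc j) = phi qq * F (Suc j) * K ?rs"
      using KF[OF rs_wts, of "Suc j" "{i..j}"] jn r1 by simp
    have w2: "K (- ?rs) * F (Suc j) = phi (1/qq) * F (Suc j) * K (- ?rs)"
      using KF[OF wts_uminus[OF rs_wts], of "Suc j" "{i..j}"] jn r1 by (simp add: phi_powim1 inverse_eq_divide)
    have w3: "K (- ?rs) * E (Suc j) = phi qq * E (Suc j) * K (- ?rs)"
      using KE[OF wts_uminus[OF rs_wts], of "Suc j" "{i..j}"] jn r1 by simp
    have w4: "K (sroot n (Suc j)) * Em i j = phi (1/qq) * Em i j * K (sroot n (Suc j))"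
      using Em_wt[OF sroot_wts, of i j "Suc j"] Suc.prems ij jn r2 by (simp add: phi_powim1 inverse_eq_divide)
    have w5: "K (sroot n (Suc j)) * Fp i j = phi qq * Fp i j * K (sroot n (Suc j))"
      using Fp_wt[OF sroot_wts, of i j "Suc j"] Suc.prems ij jn r2 by (simp add: sum_negf)
    have w6: "K (- sroot n (Suc j)) * Fp i j = phi (1/qq) * Fp i j * K (- sroot n (Suc j))"
      using Fp_wt[OF wts_uminus[OF sroot_wts], of i j "Suc j"] Suc.prems ij jn r2 by (simp add: phi_powim1 inverse_eq_divide)
    have kc1: "K (sroot n (Suc j)) * K (- ?rs) = K (- ?rs) * K (sroot n (Suc j))"
      by (rule K_comm) (auto intro: sroot_wts rs_wts wts_uminus)
    have kc2: "K (- sroot n (Suc j)) * K (- ?rs) = K (- ?rs) * K (- sroot n (Suc j))"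
      by (rule K_comm) (auto intro: sroot_wts rs_wts wts_uminus)
    have st: "Em i (Suc j) * Fp i (Suc j) - Fp i (Suc j) * Em i (Suc j)
        = DD * (K ?rs * K (sroot n (Suc j)) - K (- ?rs) * K (- sroot n (Suc j)))"
      unfolding Mq_step[OF ij] Fp_RA[OF Suc.prems(1) ij jn]
      by (rule G6_step[OF IH h2 h3 h4 w1 w2 w3 w4 w5 w6 kc1 kc2])
    have sS: "(\<Sum>k=i..Suc j. sroot n k) = ?rs + sroot n (Suc j)" using ij by simp
    have k1: "K ?rs * K (sroot n (Suc j)) = K (\<Sum>k=i..Suc j. sroot n k)"
      unfolding sS by (rule KK[OF rs_wts sroot_wts])
    have k2: "K (- ?rs) * K (- sroot n (Suc j)) = K (- (\<Sum>k=i..Suc j. sroot n k))"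
      unfolding sS minus_add_distrib by (rule KK[OF wts_uminus[OF rs_wts] wts_uminus[OF sroot_wts]])
    show ?thesis using st unfolding k1 k2 .
  qed
qed

lemma Bwt:
  assumes "x * a = phi w * a * x" "x * b = phi w1 * b * x" "x * d = phi w2 * d * x" "w1 * w2 = w"
  shows "x * (a - phi s * b * d) = phi w * (a - phi s * b * d) * x"
proof -
  have "x * (a - phi s * b * d) = x * a - phi s * (x * b * d)"
    by (simp add: algebra_simps cen_left[of x])
  also have "\<dots> = phi w * a * x - phi s * (phi w1 * b * (x * d))"
    using assms(1,2) by (simp add: mult.assoc)
  also have "\<dots> = phi w * a * x - phi s * (phi w1 * b * (phi w2 * d * x))"
    using assms(3) by simp
  also have "\<dots> = phi w * (a - phi s * b * d) * x"
    using assms(4) by (simp add: algebra_simps cen_left[of b] cen_left[of d] phi_phi mult.commute)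
  finally show ?thesis .
qed

lemma Bcomm:
  assumes "x * a = a * x" "x * b = b * x" "x * d = d * x"
  shows "x * (a - phi s * b * d) = (a - phi s * b * d) * x"
  using Bwt[of x a 1 b 1 d 1 s] assms by (simp add: phi_1)

lemma main1:
  assumes r2: "2 \<le> r" and rn: "r + 1 \<le> (n + 1) div 2"
  shows "- (phi a * EXm n r phi E * Lw n K r) * qcomm phi qq (Bgen n r phi E F K c (r - 1)) (qcomm phi qq (Bgen n r phi E F K c r) (FXp n r phi F))
     = phi (1/qq) * qcomm phi qq (Bgen n r phi E F K c (r - 1)) (qcomm phi qq (Bgen n r phi E F K c r) (FXp n r phi F)) * - (phi a * EXm n r phi E * Lw n K r)
       + phi a * qcomm phi qq (Bgen n r phi E F K c (r - 1)) (Bgen n r phi E F K c r) * Lw n K r * KX n r K"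
proof -
  have n2r: "2 * r + 1 \<le> n" using rn by simp
  define e where "e = n - r"
  have pe: "Suc r \<le> e" and en: "Suc (Suc e) \<le> n" and re: "e = n - r" using n2r r2 by (auto simp: e_def)
  have tr: "tau n r = Suc e" using n2r by (simp add: tau_def e_def)
  have tr1: "tau n (r - 1) = Suc (Suc e)" using n2r r2 by (simp add: tau_def e_def)
  have B1eq: "Bgen n r phi E F K c (r - 1) = F (r - 1) - phi (c (r - 1)) * E (Suc (Suc e)) * K (- sroot n (r - 1))"
  proof -
    have ne: "r - Suc 0 \<noteq> r" "r - Suc 0 \<noteq> Suc e" using r2 pe by auto
    show ?thesis using ne tr tr1 by (simp add: Bgen_def)
  qed
  have Beq: "Bgen n r phi E F K c r = F r - phi (c r) * Ep (Suc r) (Suc e) * K (- sroot n r)"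
    using r2 tr pe en by (simp add: Bgen_def EXp_Pq re[symmetric] Ep_RA)
  have Emeq: "EXm n r phi E = Em (Suc r) e" by (simp add: EXm_Mq re)
  have Fxeq: "FXp n r phi F = Fp (Suc r) e" by (simp add: FXp_Pq re)
  have Leq: "Lw n K r = K (sroot n r - sroot n (Suc e))" by (simp add: Lw_def tr)
  have KXeq: "KX n r K = K (\<Sum>j=Suc r..e. sroot n j)" by (simp add: KX_def re)
  let ?rs = "\<Sum>j=Suc r..e. sroot n j"
  let ?mu = "sroot n r - sroot n (Suc e)"
  have mu_w: "?mu \<in> wts n" by (intro wts_diff sroot_wts)
  have rs_w: "?rs \<in> wts n" by (rule rs_wts)
  have p1: "1 \<le> Suc r" by simp
  have r1n: "r - 1 \<in> {1..n}" "r \<in> {1..n}" "Suc e \<in> {1..n}" "Suc (Suc e) \<in> {1..n}"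
    using r2 en n2r by auto
  have s_c1: "(\<Sum>k=Suc r..e. (- sroot n (r - 1)) k) = 0"
    using sum_sroot_rng[where a="Suc r" and b=e and m="r-1" and n=n] pe en r2 by (auto simp add: sum_negf rowsum)
  have s_c2: "(\<Sum>k=Suc r..e. (- sroot n r) k) = 1"
    using sum_sroot_rng[where a="Suc r" and b=e and m="r" and n=n] pe en r2 by (auto simp add: sum_negf rowsum)
  have s_mu_t: "(\<Sum>k=Suc r..Suc e. ?mu k) = -2"
    using sum_sroot_rng[where a="Suc r" and b="Suc e" and m="r" and n=n]
      sum_sroot_rng[where a="Suc r" and b="Suc e" and m="Suc e" and n=n] pe en r2
    by (auto simp add: sum_subtractf rowsum simp del: sum.cl_ivl_Suc)
  have s_mu_e: "(\<Sum>k=Suc r..e. - ?mu k) = 0"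
    using sum_sroot_rng[where a="Suc r" and b="e" and m="r" and n=n]
      sum_sroot_rng[where a="Suc r" and b="e" and m="Suc e" and n=n] pe en r2
    by (auto simp add: sum_subtractf sum_negf rowsum)
  have mu_r1: "?mu (r - 1) = -1" using r2 en pe by (auto simp add: sroot_app cartan_def)
  have mu_u: "?mu (Suc (Suc e)) = 1" using r2 en pe by (auto simp add: sroot_app cartan_def)
  have mu_r: "?mu r = 2" using r2 en pe by (auto simp add: sroot_app cartan_def)
  have rs_r1: "?rs (r - 1) = 0" using rs_app[of "r - 1" "{Suc r..e}"] r2 en pe by (auto simp add: colsum)
  have rs_u: "?rs (Suc (Suc e)) = 0" using rs_app[of "Suc (Suc e)" "{Suc r..e}"] r2 en pe by (auto simp add: colsum)
  have rs_r: "?rs r = -1" using rs_app[of "r" "{Suc r..e}"] r2 en pe by (auto simp add: colsum)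
  have Ksw: "\<And>m. K (- sroot n m) \<in> K ` wts n" by (auto intro: wts_uminus sroot_wts)
  let ?Em = "Em (Suc r) e" and ?Fx = "Fp (Suc r) e" and ?Y = "Ep (Suc r) (Suc e)"
  let ?L = "K ?mu" and ?KX = "K ?rs" and ?KXi = "K (- ?rs)"
  let ?Kc = "K (- sroot n (r - 1))" and ?Kr = "K (- sroot n r)"
  have F1: "?Em * (F (r - 1) - phi (c (r - 1)) * E (Suc (Suc e)) * ?Kc) = (F (r - 1) - phi (c (r - 1)) * E (Suc (Suc e)) * ?Kc) * ?Em"
  proof (rule Bcomm)
    have "F (r - 1) * ?Em = ?Em * F (r - 1)"
      by (rule Mq_comm) (use pe en r2 n2r in \<open>auto intro!: EF_ne[symmetric]\<close>)
    thus "?Em * F (r - 1) = F (r - 1) * ?Em" by simp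
    have "E (Suc (Suc e)) * ?Em = ?Em * E (Suc (Suc e))"
      by (rule Mq_comm) (use pe en r2 n2r in \<open>auto intro!: E_far\<close>)
    thus "?Em * E (Suc (Suc e)) = E (Suc (Suc e)) * ?Em" by simp
    have "?Kc * ?Em = ?Em * ?Kc"
      using Em_wt[OF wts_uminus[OF sroot_wts], of "Suc r" e "r - 1"] pe en unfolding s_c1 by (simp add: phi_1)
    thus "?Em * ?Kc = ?Kc * ?Em" by simp
  qed
  have F2: "?L * (F (r - 1) - phi (c (r - 1)) * E (Suc (Suc e)) * ?Kc) = phi qq * (F (r - 1) - phi (c (r - 1)) * E (Suc (Suc e)) * ?Kc) * ?L"
  proof (rule Bwt)
    show "?L * F (r - 1) = phi qq * F (r - 1) * ?L" using KF[OF mu_w r1n(1)] unfolding mu_r1 by simp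
    show "?L * E (Suc (Suc e)) = phi qq * E (Suc (Suc e)) * ?L" using KE[OF mu_w r1n(4)] unfolding mu_u by simp
    show "?L * ?Kc = phi 1 * ?Kc * ?L" using K_comm[OF mu_w wts_uminus[OF sroot_wts]] by (simp add: phi_1)
    show "qq * 1 = qq" by simp
  qed
  have F3: "?KX * (F (r - 1) - phi (c (r - 1)) * E (Suc (Suc e)) * ?Kc) = (F (r - 1) - phi (c (r - 1)) * E (Suc (Suc e)) * ?Kc) * ?KX"
  proof (rule Bcomm)
    show "?KX * F (r - 1) = F (r - 1) * ?KX" using KF[OF rs_w r1n(1)] unfolding rs_r1 by (simp add: phi_1)
    show "?KX * E (Suc (Suc e)) = E (Suc (Suc e)) * ?KX" using KE[OF rs_w r1n(4)] unfolding rs_u by (simp add: phi_1)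
    show "?KX * ?Kc = ?Kc * ?KX" using K_comm[OF rs_w wts_uminus[OF sroot_wts]] by simp
  qed
  have KrEm: "?Kr * ?Em = phi qq * ?Em * ?Kr"
    using Em_wt[OF wts_uminus[OF sroot_wts], of "Suc r" e r] pe en unfolding s_c2 by simp
  have F4: "?Em * (F r - phi (c r) * ?Y * ?Kr) = phi 1 * (F r - phi (c r) * ?Y * ?Kr) * ?Em"
  proof (rule Bwt)
    have "F r * ?Em = ?Em * F r"
      by (rule Mq_comm) (use pe en r2 n2r in \<open>auto intro!: EF_ne[symmetric]\<close>)
    thus "?Em * F r = phi 1 * F r * ?Em" by (simp add: phi_1)
    show "?Em * ?Y = phi qq * ?Y * ?Em" using G4[of "Suc r" e e] pe en by simp
    have "?Em * ?Kr = phi (1/qq) * (phi qq * ?Em * ?Kr)"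
      by (simp add: mult.assoc[symmetric] phi_mult[symmetric] phi_1 qq_nz)
    also have "\<dots> = phi (1/qq) * (?Kr * ?Em)" unfolding KrEm ..
    finally show "?Em * ?Kr = phi (1/qq) * ?Kr * ?Em" by (simp only: mult.assoc)
    show "qq * (1/qq) = 1" using qq_nz by simp
  qed
  have F5: "?L * (F r - phi (c r) * ?Y * ?Kr) = phi (qq powi (-2)) * (F r - phi (c r) * ?Y * ?Kr) * ?L"
  proof (rule Bwt)
    show "?L * F r = phi (qq powi (-2)) * F r * ?L" using KF[OF mu_w r1n(2)] unfolding mu_r by simp
    show "?L * ?Y = phi (qq powi (-2)) * ?Y * ?L" using Ep_wt[OF mu_w, of "Suc r" "Suc e"] pe en unfolding s_mu_t by simp
    show "?L * ?Kr = phi 1 * ?Kr * ?L" using K_comm[OF mu_w wts_uminus[OF sroot_wts]] by (simp add: phi_1)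
    show "qq powi (-2) * 1 = qq powi (-2)" by simp
  qed
  have F6: "?L * ?Fx = ?Fx * ?L"
    using Fp_wt[OF mu_w, of "Suc r" e] pe en unfolding s_mu_e by (simp add: phi_1)
  have F7: "?Em * ?Fx - ?Fx * ?Em = DD * (?KX - ?KXi)"
    using G6[of "Suc r" e] pe en by simp
  have s_rs_t: "(\<Sum>k=Suc r..Suc e. ?rs k) = 1"
  proof -
    have "(\<Sum>k=Suc r..Suc e. ?rs k) = (\<Sum>k=Suc r..Suc e. \<Sum>j=Suc r..e. cartan j k)"
      by (rule sum.cong) (use en in \<open>auto simp: rs_app\<close>)
    also have "\<dots> = (\<Sum>j=Suc r..e. \<Sum>k=Suc r..Suc e. cartan j k)"
      by (rule sum.swap)
    also have "\<dots> = (\<Sum>j=Suc r..e. (if j = Suc r then 1 else 0))"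
      by (rule sum.cong) (auto simp: rowsum simp del: sum.cl_ivl_Suc)
    also have "\<dots> = 1" using pe by simp
    finally show ?thesis .
  qed
  have s_rs_tn: "(\<Sum>k=Suc r..Suc e. (- ?rs) k) = -1"
    using s_rs_t by (simp add: sum_negf)
  have F8: "?KX * (F r - phi (c r) * ?Y * ?Kr) = phi qq * (F r - phi (c r) * ?Y * ?Kr) * ?KX"
  proof (rule Bwt)
    show "?KX * F r = phi qq * F r * ?KX" using KF[OF rs_w r1n(2)] unfolding rs_r by simp
    show "?KX * ?Y = phi qq * ?Y * ?KX" using Ep_wt[OF rs_w, of "Suc r" "Suc e"] pe en unfolding s_rs_t by simp
    show "?KX * ?Kr = phi 1 * ?Kr * ?KX" using K_comm[OF rs_w wts_uminus[OF sroot_wts]] by (simp add: phi_1)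
    show "qq * 1 = qq" by simp
  qed
  have F9: "?KXi * (F r - phi (c r) * ?Y * ?Kr) = phi (1/qq) * (F r - phi (c r) * ?Y * ?Kr) * ?KXi"
  proof (rule Bwt)
    have "(- ?rs) r = 1" using rs_r by simp
    thus "?KXi * F r = phi (1/qq) * F r * ?KXi" using KF[OF wts_uminus[OF rs_w] r1n(2)]
      by (simp add: phi_powim1 inverse_eq_divide)
    show "?KXi * ?Y = phi (1/qq) * ?Y * ?KXi" using Ep_wt[OF wts_uminus[OF rs_w], of "Suc r" "Suc e"] pe en
      unfolding s_rs_tn by (simp add: phi_powim1 inverse_eq_divide)
    show "?KXi * ?Kr = phi 1 * ?Kr * ?KXi" using K_comm[OF wts_uminus[OF rs_w] wts_uminus[OF sroot_wts]] by (simp add: phi_1)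
    show "(1/qq) * 1 = 1/qq" by simp
  qed
  have F10: "?L * ?KX = ?KX * ?L" by (rule K_comm[OF mu_w rs_w])
  have F4': "?Em * (F r - phi (c r) * ?Y * ?Kr) = (F r - phi (c r) * ?Y * ?Kr) * ?Em"
    using F4 by (simp add: phi_1)
  have F5': "?L * (F r - phi (c r) * ?Y * ?Kr) = phi (1/qq) * (phi (1/qq) * ((F r - phi (c r) * ?Y * ?Kr) * ?L))"
    using F5 by (simp add: qq_m2 mult.assoc)
  show ?thesis
    unfolding B1eq Beq Emeq Fxeq Leq KXeq
    by (rule assemble[OF F1 F2 F3 F4' F5' F6 F7 F8 F9 F10])
qed

end

definition tw :: "nat \<Rightarrow> (nat \<Rightarrow> int) \<Rightarrow> (nat \<Rightarrow> int)" where
  "tw n mu = (\<lambda>j. if 1 \<le> j \<and> j \<le> n then mu (tau n j) else 0)"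

lemma tau_rng: "j \<in> {1..n} \<Longrightarrow> tau n j \<in> {1..n}"
  by (auto simp: tau_def)
lemma tau_tau: "j \<in> {1..n} \<Longrightarrow> tau n (tau n j) = j"
  by (auto simp: tau_def)
lemma tau_int: "j \<in> {1..n} \<Longrightarrow> int (tau n j) = int n + 1 - int j"
  by (auto simp: tau_def of_nat_diff)
lemma tau_absdiff: "i \<in> {1..n} \<Longrightarrow> j \<in> {1..n} \<Longrightarrow> \<bar>int (tau n i) - int (tau n j)\<bar> = \<bar>int i - int j\<bar>"
  by (simp add: tau_int abs_minus_commute)
lemma tau_inj: "i \<in> {1..n} \<Longrightarrow> j \<in> {1..n} \<Longrightarrow> tau n i = tau n j \<longleftrightarrow> i = j"
  by (metis tau_tau)

lemma tw_wts: "tw n mu \<in> wts n" by (simp add: tw_def wts_def)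
lemma tw_zero: "tw n 0 = 0" by (simp add: tw_def fun_eq_iff)
lemma tw_add: "tw n (mu + la) = tw n mu + tw n la" by (simp add: tw_def fun_eq_iff)
lemma tw_uminus: "tw n (- mu) = - tw n mu" by (simp add: tw_def fun_eq_iff)
lemma tw_diff: "tw n (mu - la) = tw n mu - tw n la" by (simp add: tw_def fun_eq_iff)
lemma tw_sum: "tw n (\<Sum>k\<in>A. f k) = (\<Sum>k\<in>A. tw n (f k))"
proof (induction A rule: infinite_finite_induct)
  case (infinite A) thus ?case by (metis sum.infinite tw_zero)
next
  case empty thus ?case by (simp only: sum.empty tw_zero)
next
  case (insert x F)
  have "sum f (insert x F) = f x + sum f F" by (rule sum.insert[OF insert.hyps(1,2)])
  moreover have "(\<Sum>k\<in>insert x F. tw n (f k)) = tw n (f x) + (\<Sum>k\<in>F. tw n (f k))"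
    by (rule sum.insert[OF insert.hyps(1,2)])
  ultimately show ?case using insert.IH by (simp only: tw_add)
qed
lemma tw_app: "j \<in> {1..n} \<Longrightarrow> tw n mu (tau n j) = mu j"
  using tau_rng[of j n] by (simp add: tw_def tau_tau)
lemma tw_sroot: "i \<in> {1..n} \<Longrightarrow> tw n (sroot n i) = sroot n (tau n i)"
proof (rule ext)
  fix j assume i: "i \<in> {1..n}"
  show "tw n (sroot n i) j = sroot n (tau n i) j"
  proof (cases "j \<in> {1..n}")
    case True
    have "cartan i (tau n j) = cartan (tau n i) j"
      using tau_int[OF True] tau_int[OF i] True i
      unfolding cartan_def by (auto simp: abs_if split: if_splits)
    thus ?thesis using True tau_rng[OF True] by (simp add: tw_def sroot_def)
  next
    case False thus ?thesis by (auto simp: tw_def sroot_def)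
  qed
qed

lemma uq_twist:
  assumes R: "uq_rels n phi E F K"
  shows "uq_rels n phi (\<lambda>i. E (tau n i)) (\<lambda>i. F (tau n i)) (\<lambda>mu. K (tw n mu))"
proof -
  interpret U: uqm n phi E F K by (rule uqm.intro[OF R])
  have c7: "\<forall>mu\<in>wts n. \<forall>i\<in>{1..n}. K (tw n mu) * E (tau n i) = phi (qq powi (mu i)) * E (tau n i) * K (tw n mu)"
    using U.KE[OF tw_wts tau_rng] by (simp add: tw_app)
  have c8: "\<forall>mu\<in>wts n. \<forall>i\<in>{1..n}. K (tw n mu) * F (tau n i) = phi (qq powi (- mu i)) * F (tau n i) * K (tw n mu)"
    using U.KF[OF tw_wts tau_rng] by (simp add: tw_app)
  have c6: "\<forall>mu\<in>wts n. \<forall>la\<in>wts n. K (tw n mu) * K (tw n la) = K (tw n (mu + la))"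
    using U.KK[OF tw_wts tw_wts] by (simp add: tw_add)
  have c9: "\<forall>i\<in>{1..n}. \<forall>j\<in>{1..n}. E (tau n i) * F (tau n j) - F (tau n j) * E (tau n i) =
        (if i = j then phi (1 / (qq - 1 / qq)) * (K (tw n (sroot n i)) - K (tw n (- sroot n i))) else 0)"
  proof (intro ballI)
    fix i j assume i: "i \<in> {1..n}" and j: "j \<in> {1..n}"
    show "E (tau n i) * F (tau n j) - F (tau n j) * E (tau n i) =
        (if i = j then phi (1 / (qq - 1 / qq)) * (K (tw n (sroot n i)) - K (tw n (- sroot n i))) else 0)"
      using U.EF[OF tau_rng[OF i] tau_rng[OF j]] tau_inj[OF i j]
      by (simp add: tw_uminus tw_sroot[OF i] tw_sroot[OF j])
  qed
  have c10: "\<forall>i\<in>{1..n}. \<forall>j\<in>{1..n}. \<bar>int i - int j\<bar> = 1 \<longrightarrow>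
        E (tau n i) * E (tau n i) * E (tau n j) - phi (qq + 1 / qq) * (E (tau n i) * E (tau n j) * E (tau n i)) + E (tau n j) * E (tau n i) * E (tau n i) = 0 \<and>
        F (tau n i) * F (tau n i) * F (tau n j) - phi (qq + 1 / qq) * (F (tau n i) * F (tau n j) * F (tau n i)) + F (tau n j) * F (tau n i) * F (tau n i) = 0"
  proof (intro ballI impI conjI)
    fix i j assume i: "i \<in> {1..n}" and j: "j \<in> {1..n}" and h: "\<bar>int i - int j\<bar> = 1"
    have h': "\<bar>int (tau n i) - int (tau n j)\<bar> = 1" using h tau_absdiff[OF i j] by simp
    show "E (tau n i) * E (tau n i) * E (tau n j) - phi (qq + 1 / qq) * (E (tau n i) * E (tau n j) * E (tau n i)) + E (tau n j) * E (tau n i) * E (tau n i) = 0"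
      by (rule U.serreE[OF tau_rng[OF i] tau_rng[OF j] h'])
    show "F (tau n i) * F (tau n i) * F (tau n j) - phi (qq + 1 / qq) * (F (tau n i) * F (tau n j) * F (tau n i)) + F (tau n j) * F (tau n i) * F (tau n i) = 0"
      by (rule U.serreF[OF tau_rng[OF i] tau_rng[OF j] h'])
  qed
  have c11: "\<forall>i\<in>{1..n}. \<forall>j\<in>{1..n}. \<bar>int i - int j\<bar> > 1 \<longrightarrow>
        E (tau n i) * E (tau n j) = E (tau n j) * E (tau n i) \<and> F (tau n i) * F (tau n j) = F (tau n j) * F (tau n i)"
  proof (intro ballI impI conjI)
    fix i j assume i: "i \<in> {1..n}" and j: "j \<in> {1..n}" and h: "\<bar>int i - int j\<bar> > 1"
    have h': "\<bar>int (tau n i) - int (tau n j)\<bar> > 1" using h tau_absdiff[OF i j] by simp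
    show "E (tau n i) * E (tau n j) = E (tau n j) * E (tau n i)"
      by (rule U.farE[OF tau_rng[OF i] tau_rng[OF j] h'])
    show "F (tau n i) * F (tau n j) = F (tau n j) * F (tau n i)"
      by (rule U.farF[OF tau_rng[OF i] tau_rng[OF j] h'])
  qed
  have K0': "K (tw n 0) = 1" by (simp only: tw_zero U.K0)
  have p1: "\<forall>x y. phi (x + y) = phi x + phi y" using U.phi_add by blast
  have p2: "\<forall>x y. phi (x * y) = phi x * phi y" using U.phi_mult by blast
  have p4: "\<forall>x a. phi x * a = a * phi x" using U.cen by blast
  show ?thesis
    unfolding uq_rels_def
    by (intro conjI p1 p2 U.phi_1 p4 K0' c6 c7 c8 c9 c10 c11)
qed


lemma map_tau_upt:
  assumes "2 * r + 1 \<le> n"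
  shows "map (tau n) [r+1..<n-r] = rev [r+2..<n-r+1]"
proof (rule nth_equalityI)
  show "length (map (tau n) [r+1..<n-r]) = length (rev [r+2..<n-r+1])"
    by (simp only: length_map length_rev length_upt)
  fix k assume "k < length (map (tau n) [r+1..<n-r])"
  hence k: "k < n - r - (r + 1)" by (simp only: length_map length_upt)
  have l2: "length [r+2..<n-r+1] = n - r + 1 - (r + 2)" by (simp only: length_upt)
  have "map (tau n) [r+1..<n-r] ! k = tau n (r + 1 + k)"
    using k by (simp only: nth_map length_upt nth_upt)
  also have "\<dots> = r + 2 + (n - r + 1 - (r + 2) - Suc k)"
    using k assms by (simp add: tau_def)
  also have "\<dots> = rev [r+2..<n-r+1] ! k"
    using k assms by (simp only: rev_nth l2 nth_upt)
  finally show "map (tau n) [r+1..<n-r] ! k = rev [r+2..<n-r+1] ! k" .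
qed

lemma map_tau_upt2:
  assumes "2 * r + 1 \<le> n"
  shows "map (tau n) (rev [r+2..<n-r+1]) = [r+1..<n-r]"
proof -
  have "map (tau n) (rev [r+2..<n-r+1]) = map (tau n) (map (tau n) [r+1..<n-r])"
    by (simp only: map_tau_upt[OF assms])
  also have "\<dots> = [r+1..<n-r]"
    unfolding map_map by (rule map_idI) (auto simp: tau_def)
  finally show ?thesis .
qed

lemma EXp_tw: assumes "2 * r + 1 \<le> n" shows "EXp n r phi (\<lambda>i. E (tau n i)) = EXm n r phi E"
proof -
  have t: "tau n (n - r) = r + 1" using assms by (simp add: tau_def)
  have "EXp n r phi (\<lambda>i. E (tau n i)) = foldr (\<lambda>j acc. qcomm phi (1/qq) (E j) acc) (map (tau n) [r+1..<n-r]) (E (tau n (n-r)))"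
    unfolding EXp_def foldr_map o_def ..
  also have "\<dots> = EXm n r phi E"
    unfolding EXm_def map_tau_upt[OF assms] t ..
  finally show ?thesis .
qed
lemma EXm_tw: assumes "2 * r + 1 \<le> n" shows "EXm n r phi (\<lambda>i. E (tau n i)) = EXp n r phi E"
proof -
  have t: "tau n (r + 1) = n - r" using assms by (simp add: tau_def)
  have "EXm n r phi (\<lambda>i. E (tau n i)) = foldr (\<lambda>j acc. qcomm phi (1/qq) (E j) acc) (map (tau n) (rev [r+2..<n-r+1])) (E (tau n (r + 1)))"
    unfolding EXm_def foldr_map o_def ..
  also have "\<dots> = EXp n r phi E"
    unfolding EXp_def map_tau_upt2[OF assms] t ..
  finally show ?thesis .
qed
lemma FXp_tw: assumes "2 * r + 1 \<le> n" shows "FXp n r phi (\<lambda>i. F (tau n i)) = FXm n r phi F"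
proof -
  have t: "tau n (n - r) = r + 1" using assms by (simp add: tau_def)
  have "FXp n r phi (\<lambda>i. F (tau n i)) = foldr (\<lambda>j acc. qcomm phi qq (F j) acc) (map (tau n) [r+1..<n-r]) (F (tau n (n-r)))"
    unfolding FXp_def foldr_map o_def ..
  also have "\<dots> = FXm n r phi F"
    unfolding FXm_def map_tau_upt[OF assms] t ..
  finally show ?thesis .
qed

lemma tau_img: "2 * r + 1 \<le> n \<Longrightarrow> tau n ` {r+1..n-r} = {r+1..n-r}"
proof
  assume "2 * r + 1 \<le> n"
  show "tau n ` {r+1..n-r} \<subseteq> {r+1..n-r}" by (auto simp: tau_def)
  show "{r+1..n-r} \<subseteq> tau n ` {r+1..n-r}"
  proof
    fix j assume j: "j \<in> {r+1..n-r}"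
    hence "tau n (tau n j) = j" "tau n j \<in> {r+1..n-r}" by (auto simp: tau_def)
    thus "j \<in> tau n ` {r+1..n-r}" by (metis image_eqI)
  qed
qed

lemma KX_tw: "2 * r + 1 \<le> n \<Longrightarrow> KX n r (\<lambda>mu. K (tw n mu)) = KX n r K"
proof -
  assume a: "2 * r + 1 \<le> n"
  have inj: "inj_on (tau n) {r+1..n-r}" by (rule inj_onI) (auto simp: tau_def)
  have "tw n (\<Sum>j\<in>{r+1..n-r}. sroot n j) = (\<Sum>j\<in>{r+1..n-r}. sroot n (tau n j))"
    unfolding tw_sum by (rule sum.cong) (use a in \<open>auto intro!: tw_sroot\<close>)
  also have "\<dots> = (\<Sum>j\<in>tau n ` {r+1..n-r}. sroot n j)"
    by (simp only: sum.reindex[OF inj] o_def)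
  also have "\<dots> = (\<Sum>j\<in>{r+1..n-r}. sroot n j)" by (simp only: tau_img[OF a])
  finally show ?thesis by (simp add: KX_def)
qed

lemma Lw_tw: assumes r1: "r \<in> {1..n}" shows "Lw n (\<lambda>mu. K (tw n mu)) r = Lw n K (tau n r)"
  unfolding Lw_def tw_diff tw_sroot[OF r1] tw_sroot[OF tau_rng[OF r1]] tau_tau[OF r1] ..

lemma Bgen_tw1:
  assumes "2 \<le> r" "2 * r + 1 \<le> n"
  shows "Bgen n r phi (\<lambda>i. E (tau n i)) (\<lambda>i. F (tau n i)) (\<lambda>mu. K (tw n mu)) (\<lambda>i. c (tau n i)) (r - 1)
       = Bgen n r phi E F K c (tau n (r - 1))"
proof -
  have r1: "r - 1 \<in> {1..n}" using assms by auto
  have ne: "r - 1 \<noteq> r" "r - 1 \<noteq> tau n r" "tau n (r - 1) \<noteq> r" "tau n (r - 1) \<noteq> tau n r"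
    using assms by (auto simp: tau_def)
  show ?thesis using ne unfolding Bgen_def tw_uminus tw_sroot[OF r1] tau_tau[OF r1]
    by simp
qed

lemma Bgen_tw2:
  assumes "2 \<le> r" "2 * r + 1 \<le> n"
  shows "Bgen n r phi (\<lambda>i. E (tau n i)) (\<lambda>i. F (tau n i)) (\<lambda>mu. K (tw n mu)) (\<lambda>i. c (tau n i)) r
       = Bgen n r phi E F K c (tau n r)"
proof -
  have r1: "r \<in> {1..n}" using assms by auto
  have ne: "tau n r \<noteq> r" using assms by (auto simp: tau_def)
  show ?thesis using ne unfolding Bgen_def
    by (simp add: tw_uminus tw_sroot[OF r1] tau_tau[OF r1] EXp_tw[OF assms(2)])
qed

theorem lemmaA3:
  fixes n r :: nat
    and phi :: "'k::field_char_0 poly fract \<Rightarrow> 'a::ring_1"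
    and E F :: "nat \<Rightarrow> 'a" and K :: "(nat \<Rightarrow> int) \<Rightarrow> 'a"
    and c :: "nat \<Rightarrow> 'k poly fract"
  assumes "1 \<le> n"
    and "2 \<le> r" and "r + 1 \<le> (n + 1) div 2"
    and "uq_rels n phi E F K"
    and "\<forall>i\<in>{1..n} - {r+1..n-r}. c i \<noteq> 0"
    and "\<forall>i\<in>{1..n} - ({r+1..n-r} \<union> {r, tau n r}). c i = c (tau n i)"
  shows
    "(let B = Bgen n r phi E F K c;
          S = qcomm phi qq (B (r - 1)) (qcomm phi qq (B r) (FXp n r phi F));
          St = qcomm phi qq (B (tau n (r - 1))) (qcomm phi qq (B (tau n r)) (FXm n r phi F));
          Zr = - (phi (1 - qq powi (-2)) * EXp n r phi E * Lw n K (tau n r));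
          Ztr = - (phi (1 - qq powi (-2)) * EXm n r phi E * Lw n K r)
      in Ztr * S = phi (1 / qq) * S * Ztr
                   + phi (1 - qq powi (-2)) * qcomm phi qq (B (r - 1)) (B r) * Lw n K r * KX n r K
       \<and> Zr * St = phi (1 / qq) * St * Zr
                   + phi (1 - qq powi (-2)) * qcomm phi qq (B (tau n (r - 1))) (B (tau n r))
                       * Lw n K (tau n r) * KX n r K)"
proof -
  have n2r: "2 * r + 1 \<le> n" using assms(3) by simp
  have r1: "r \<in> {1..n}" using assms(2) n2r by auto
  interpret U: uqm n phi E F K by (rule uqm.intro[OF assms(4)])
  interpret V: uqm n phi "\<lambda>i. E (tau n i)" "\<lambda>i. F (tau n i)" "\<lambda>mu. K (tw n mu)"
    by (rule uqm.intro[OF uq_twist[OF assms(4)]])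
  note I1 = U.main1[OF assms(2,3), of "1 - qq powi (-2)" c]
  note I2 = V.main1[OF assms(2,3), of "1 - qq powi (-2)" "\<lambda>i. c (tau n i)"]
  note I2' = I2[unfolded EXm_tw[OF n2r] FXp_tw[OF n2r] KX_tw[OF n2r] Lw_tw[OF r1]
     Bgen_tw1[OF assms(2) n2r] Bgen_tw2[OF assms(2) n2r]]
  show ?thesis unfolding Let_def by (rule conjI[OF I1 I2'])
qed

end
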